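(* Let $n\ge 1$ and let $\mathcal{F}=(W,R)$ be a finite transitive frame of circumference at most $n$ all of whose final clusters are simple. Let $X_\mathcal{F}$ be the space constructed from $\mathcal{F}$ as described in the context. Then $X_\mathcal{F}$ is openly irresolvable.
   Context: Spaces: a space is $k$-resolvable if it has $k$ pairwise disjoint non-empty dense subsets; resolvable means 2-resolvable; irresolvable means not resolvable; $X$ is openly irresolvable if every non-empty open subspace is irresolvable. $S\subseteq X$ is crowded in $X$ if it has no isolated points as a subspace. Frames: for transitive $(W,R)$, clusters are equivalence classes of $\{(x,y):x=y\text{ or }xRyRx\}$; the cluster of $x$ is degenerate if $x$ is irreflexive, non-degenerate otherwise, and simple if it is a non-degenerate singleton; $CRC'$ for clusters iff $xRy$ for representatives, $CR^\uparrow C'$ iff $CRC'$ and not $C'RC$; $C$ is final if there is no $C'\ne C$ with $CRC'$. The circumference is the supremum of lengths $m$ of cycles $x_1R\cdots Rx_mRx_1$ of distinct points (0 if none). Auxiliary spaces: fix a non-principal ultrafilter $\mathcal{U}$ on $\omega$; $E$ is $\omega$ with open sets $\mathcal{U}\cup\{\emptyset\}$. For $k\ge1$, $X_k$ is $\omega\times\{1,\dots,k\}$ whose open sets are $\emptyset$ and all $\bigcup_{i=1}^k(O_i\times\{i\})$ with each $O_i$ a non-empty open subset of $E$; $S_i=\omega\times\{i\}$. $Y_k$ is the subspace of $X_k$ obtained by removing from $X_k$ the union of all subsets of $X_k$ that are $(k+1)$-resolvable as subspaces, with the $k$-partition $\{Y_k\cap S_i:1\le i\le k\}$ (for $k=1$,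 $Y_1=X_1$, a copy of $E$). Construction of $X_\mathcal{F}$: for each cluster $C$ choose a space $X_C$ partitioned as $\{X_w:w\in C\}$: if $C=\{w\}$ is degenerate, $X_C=X_w=\{w\}$; if $C=\{w_1,\dots,w_k\}$ is non-degenerate, $X_C$ is a copy of $Y_k$ with the cells $Y_k\cap S_1,\dots,Y_k\cap S_k$ labelled $X_{w_1},\dots,X_{w_k}$. The $X_C$ are pairwise disjoint. $X_\mathcal{F}=\bigcup_C X_C$, where $O\subseteq X_\mathcal{F}$ is open iff for every $C$, $O\cap X_C$ is open in $X_C$, and if $O\cap X_C\ne\emptyset$ then $X_{C'}\subseteq O$ for all $C'$ with $CR^\uparrow C'$. *)

theory Defs
  imports "HOL-Analysis.Analysis"
begin

definition k_resolvable :: "'a topology \<Rightarrow> nat \<Rightarrow> bool" where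
  "k_resolvable T k \<longleftrightarrow>
     (\<exists>D :: nat \<Rightarrow> 'a set.
        (\<forall>i<k. D i \<subseteq> topspace T \<and> D i \<noteq> {} \<and> T closure_of (D i) = topspace T) \<and>
        (\<forall>i<k. \<forall>j<k. i \<noteq> j \<longrightarrow> D i \<inter> D j = {}))"

definition resolvable :: "'a topology \<Rightarrow> bool" where
  "resolvable T \<longleftrightarrow> k_resolvable T 2"

definition openly_irresolvable :: "'a topology \<Rightarrow> bool" where
  "openly_irresolvable T \<longleftrightarrow>
     (\<forall>V. openin T V \<and> V \<noteq> {} \<longrightarrow> \<not> resolvable (subtopology T V))"

definition nonprincipal_ultrafilter :: "nat set set \<Rightarrow> bool" where
  "nonprincipal_ultrafilter U \<longleftrightarrow>
     UNIV \<in> U \<and> {} \<notin> U \<and>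
     (\<forall>A B. A \<in> U \<and> A \<subseteq> B \<longrightarrow> B \<in> U) \<and>
     (\<forall>A B. A \<in> U \<and> B \<in> U \<longrightarrow> A \<inter> B \<in> U) \<and>
     (\<forall>A. A \<in> U \<or> - A \<in> U) \<and>
     (\<forall>n. {n} \<notin> U)"

definition Etop :: "nat set set \<Rightarrow> nat topology" where
  "Etop U = topology (\<lambda>S. S \<in> U \<or> S = {})"

definition Xtop :: "nat set set \<Rightarrow> nat \<Rightarrow> (nat \<times> nat) topology" where
  "Xtop U k = topology (\<lambda>S. S \<subseteq> UNIV \<times> {1..k} \<and>
      (S = {} \<or> (\<forall>i\<in>{1..k}. {m. (m, i) \<in> S} \<noteq> {} \<and> openin (Etop U) {m. (m, i) \<in> S})))"

definition Yset :: "nat set set \<Rightarrow> nat \<Rightarrow> (nat \<times> nat) set" where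
  "Yset U k = topspace (Xtop U k) -
      \<Union>{A. A \<subseteq> topspace (Xtop U k) \<and> k_resolvable (subtopology (Xtop U k) A) (k + 1)}"

definition Ytop :: "nat set set \<Rightarrow> nat \<Rightarrow> (nat \<times> nat) topology" where
  "Ytop U k = subtopology (Xtop U k) (Yset U k)"

definition cluster_of :: "'w set \<Rightarrow> 'w rel \<Rightarrow> 'w \<Rightarrow> 'w set" where
  "cluster_of W R x = {y \<in> W. y = x \<or> ((x, y) \<in> R \<and> (y, x) \<in> R)}"

definition clusters :: "'w set \<Rightarrow> 'w rel \<Rightarrow> 'w set set" where
  "clusters W R = cluster_of W R ` W"

definition nondegenerate :: "'w rel \<Rightarrow> 'w set \<Rightarrow> bool" where
  "nondegenerate R C \<longleftrightarrow> (\<exists>x\<in>C. (x, x) \<in> R)"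

definition simple_cluster :: "'w rel \<Rightarrow> 'w set \<Rightarrow> bool" where
  "simple_cluster R C \<longleftrightarrow> nondegenerate R C \<and> card C = 1"

definition cl_rel :: "'w rel \<Rightarrow> 'w set \<Rightarrow> 'w set \<Rightarrow> bool" where
  "cl_rel R C C' \<longleftrightarrow> (\<exists>x\<in>C. \<exists>y\<in>C'. (x, y) \<in> R)"

definition cl_up :: "'w rel \<Rightarrow> 'w set \<Rightarrow> 'w set \<Rightarrow> bool" where
  "cl_up R C C' \<longleftrightarrow> cl_rel R C C' \<and> \<not> cl_rel R C' C"

definition final_cluster :: "'w set \<Rightarrow> 'w rel \<Rightarrow> 'w set \<Rightarrow> bool" where
  "final_cluster W R C \<longleftrightarrow> C \<in> clusters W R \<and>
     \<not> (\<exists>C'\<in>clusters W R. C' \<noteq> C \<and> cl_rel R C C')"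

definition is_cycle :: "'w set \<Rightarrow> 'w rel \<Rightarrow> 'w list \<Rightarrow> bool" where
  "is_cycle W R xs \<longleftrightarrow> xs \<noteq> [] \<and> distinct xs \<and> set xs \<subseteq> W \<and>
     (\<forall>i. Suc i < length xs \<longrightarrow> (xs ! i, xs ! Suc i) \<in> R) \<and>
     (last xs, hd xs) \<in> R"

definition circumference :: "'w set \<Rightarrow> 'w rel \<Rightarrow> nat" where
  "circumference W R = Sup (insert 0 {length xs | xs. is_cycle W R xs})"

text \<open>Points of X_F are pairs (w, m); the cell X_w is
  {(w,0)} if the cluster of w is degenerate, and otherwise the copy of
  Y_k \<inter> S_(idx w) (k = size of the cluster), where idx enumerates the cluster.\<close>
definition cell :: "nat set set \<Rightarrow> 'w set \<Rightarrow> 'w rel \<Rightarrow> ('w \<Rightarrow> nat) \<Rightarrow> 'w \<Rightarrow> ('w \<times> nat) set" where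
  "cell U W R idx w =
     (if nondegenerate R (cluster_of W R w)
      then {(w, m) | m. (m, idx w) \<in> Yset U (card (cluster_of W R w))}
      else {(w, 0)})"

definition XC :: "nat set set \<Rightarrow> 'w set \<Rightarrow> 'w rel \<Rightarrow> ('w \<Rightarrow> nat) \<Rightarrow> 'w set \<Rightarrow> ('w \<times> nat) set" where
  "XC U W R idx C = (\<Union>w\<in>C. cell U W R idx w)"

text \<open>Open sets of X_C: for a non-degenerate cluster, via the copy of Y_k;
  for a degenerate (singleton) cluster, the discrete topology on a point.\<close>
definition XC_open :: "nat set set \<Rightarrow> 'w set \<Rightarrow> 'w rel \<Rightarrow> ('w \<Rightarrow> nat) \<Rightarrow> 'w set \<Rightarrow> ('w \<times> nat) set \<Rightarrow> bool" where
  "XC_open U W R idx C V \<longleftrightarrow> V \<subseteq> XC U W R idx C \<and>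
     (nondegenerate R C \<longrightarrow> openin (Ytop U (card C)) ((\<lambda>(w, m). (m, idx w)) ` V))"

definition XF_set :: "nat set set \<Rightarrow> 'w set \<Rightarrow> 'w rel \<Rightarrow> ('w \<Rightarrow> nat) \<Rightarrow> ('w \<times> nat) set" where
  "XF_set U W R idx = (\<Union>C\<in>clusters W R. XC U W R idx C)"

definition XF_top :: "nat set set \<Rightarrow> 'w set \<Rightarrow> 'w rel \<Rightarrow> ('w \<Rightarrow> nat) \<Rightarrow> ('w \<times> nat) topology" where
  "XF_top U W R idx = topology (\<lambda>V. V \<subseteq> XF_set U W R idx \<and>
     (\<forall>C\<in>clusters W R.
        XC_open U W R idx C (V \<inter> XC U W R idx C) \<and>
        (V \<inter> XC U W R idx C \<noteq> {} \<longrightarrow>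
           (\<forall>C'\<in>clusters W R. cl_up R C C' \<longrightarrow> XC U W R idx C' \<subseteq> V))))"

end

theory Submission imports Defs begin

lemma Ufacts:
  assumes U: "nonprincipal_ultrafilter U"
  shows "{} \<notin> U" "\<And>A B. A \<in> U \<Longrightarrow> A \<subseteq> B \<Longrightarrow> B \<in> U"
    "\<And>A B. A \<in> U \<Longrightarrow> B \<in> U \<Longrightarrow> A \<inter> B \<in> U"
    "\<And>A. A \<in> U \<or> - A \<in> U" "UNIV \<in> U"
  using U unfolding nonprincipal_ultrafilter_def by blast+
lemma Etop_open:
  assumes U: "nonprincipal_ultrafilter U"
  shows "openin (Etop U) S \<longleftrightarrow> S \<in> U \<or> S = {}"
proof -
  have "istopology (\<lambda>S. S \<in> U \<or> S = {})"
    unfolding istopology_def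
  proof (intro conjI allI impI)
    fix S T assume "S \<in> U \<or> S = {}" "T \<in> U \<or> T = {}"
    then show "S \<inter> T \<in> U \<or> S \<inter> T = {}" using U unfolding nonprincipal_ultrafilter_def by blast
  next
    fix K :: "nat set set" assume K: "\<forall>k\<in>K. k \<in> U \<or> k = {}"
    show "\<Union>K \<in> U \<or> \<Union>K = {}"
    proof (cases "\<Union>K = {}")
      case False
      then obtain k where "k \<in> K" "k \<noteq> {}" by blast
      then have "k \<in> U" using K by blast
      then show ?thesis using U \<open>k \<in> K\<close> unfolding nonprincipal_ultrafilter_def by blast
    qed simp
  qed
  then show ?thesis unfolding Etop_def by simp
qed

lemma Xtop1_open:
  assumes U: "nonprincipal_ultrafilter U"
  shows "openin (Xtop U 1) S \<longleftrightarrow> S \<subseteq> UNIV \<times> {1} \<and> (S = {} \<or> {m. (m, 1) \<in> S} \<in> U)"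
proof -
  have e: "{} \<notin> U" using U unfolding nonprincipal_ultrafilter_def by blast
  define P where "P = (\<lambda>S::(nat\<times>nat) set. S \<subseteq> UNIV \<times> {1} \<and> (S = {} \<or> {m. (m, 1) \<in> S} \<in> U))"
  have eq: "(\<lambda>S. S \<subseteq> UNIV \<times> {1..1} \<and>
      (S = {} \<or> (\<forall>i\<in>{1..1}. {m. (m, i) \<in> S} \<noteq> {} \<and> openin (Etop U) {m. (m, i) \<in> S}))) = P"
    unfolding P_def Etop_open[OF U] using e by (auto intro!: ext)
  have "istopology P"
    unfolding istopology_def
  proof (intro conjI allI impI)
    fix S T assume "P S" "P T"
    show "P (S \<inter> T)"
    proof (cases "S = {} \<or> T = {}")
      case True then show ?thesis unfolding P_def by auto
    next
      case False
      then have "{m. (m, 1) \<in> S} \<in> U" "{m. (m, 1) \<in> T} \<in> U" using \<open>P S\<close> \<open>P T\<close> unfolding P_def by auto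
      then have "{m. (m, 1) \<in> S} \<inter> {m. (m, 1) \<in> T} \<in> U" using U unfolding nonprincipal_ultrafilter_def by blast
      moreover have "{m. (m, 1) \<in> S} \<inter> {m. (m, 1) \<in> T} = {m. (m, 1) \<in> S \<inter> T}" by blast
      ultimately show ?thesis using \<open>P S\<close> unfolding P_def by auto
    qed
  next
    fix K :: "(nat\<times>nat) set set" assume K: "\<forall>k\<in>K. P k"
    show "P (\<Union>K)"
    proof (cases "\<Union>K = {}")
      case False
      then obtain k where "k \<in> K" "k \<noteq> {}" by blast
      then have "{m. (m, 1) \<in> k} \<in> U" using K unfolding P_def by blast
      moreover have "{m. (m, 1) \<in> k} \<subseteq> {m. (m, 1) \<in> \<Union>K}" using \<open>k \<in> K\<close> by blast
      ultimately have "{m. (m, 1) \<in> \<Union>K} \<in> U" using U unfolding nonprincipal_ultrafilter_def by blast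
      then show ?thesis using K unfolding P_def by blast
    qed (auto simp: P_def)
  qed
  then show ?thesis unfolding Xtop_def eq by (simp add: P_def)
qed

lemma Xtop1_topspace:
  assumes U: "nonprincipal_ultrafilter U"
  shows "topspace (Xtop U 1) = UNIV \<times> {1}"
proof
  show "topspace (Xtop U 1) \<subseteq> UNIV \<times> {1}" unfolding topspace_def using Xtop1_open[OF U] by blast
  have "UNIV \<in> U" using U unfolding nonprincipal_ultrafilter_def by blast
  then have "openin (Xtop U 1) (UNIV \<times> {1})" using Xtop1_open[OF U] by simp
  then show "UNIV \<times> {1} \<subseteq> topspace (Xtop U 1)" by (rule openin_subset)
qed

lemma not2res:
  assumes U: "nonprincipal_ultrafilter U" and A: "A \<subseteq> UNIV \<times> {1}"
  shows "\<not> k_resolvable (subtopology (Xtop U 1) A) 2"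
proof
  assume "k_resolvable (subtopology (Xtop U 1) A) 2"
  then obtain D where D: "\<forall>i<(2::nat). D i \<subseteq> topspace (subtopology (Xtop U 1) A) \<and> D i \<noteq> {} \<and> (subtopology (Xtop U 1) A) closure_of (D i) = topspace (subtopology (Xtop U 1) A)"
     and dis: "\<forall>i<(2::nat). \<forall>j<(2::nat). i \<noteq> j \<longrightarrow> D i \<inter> D j = {}"
    unfolding k_resolvable_def by blast
  note Ue = Ufacts(1)[OF U] and Uup = Ufacts(2)[OF U] and Uint = Ufacts(3)[OF U] and Ucomp = Ufacts(4)[OF U]
  have tA: "topspace (subtopology (Xtop U 1) A) = A" unfolding topspace_subtopology Xtop1_topspace[OF U] using A by blast
  have key: "{m. (m,1) \<in> E} \<in> U" if E: "E \<subseteq> A" "(subtopology (Xtop U 1) A) closure_of E = A"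
     and F: "F \<subseteq> A" "F \<noteq> {}" "E \<inter> F = {}" for E F
  proof -
    obtain x where "x \<in> F" using F by blast
    then have "x \<in> UNIV \<times> {1}" using F(1) A by blast
    then obtain m where xm: "x = (m,1)" by auto
    define S where "S = - {m'. (m',1) \<in> E} \<union> {m}"
    have "S \<notin> U"
    proof
      assume "S \<in> U"
      moreover have "{m. (m, 1) \<in> S \<times> {1}} = S" by blast
      ultimately have "openin (Xtop U 1) (S \<times> {1})" unfolding Xtop1_open[OF U] by auto
      then have o: "openin (subtopology (Xtop U 1) A) (S \<times> {1} \<inter> A)" by (rule openin_subtopology_Int)
      have "x \<in> A" using F(1) \<open>x \<in> F\<close> by blast
      then have "x \<in> (subtopology (Xtop U 1) A) closure_of E" using E(2) by simp
      moreover have "x \<in> S \<times> {1} \<inter> A" using \<open>x \<in> A\<close> unfolding xm S_def by simp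
      ultimately obtain y where "y \<in> E" "y \<in> S \<times> {1} \<inter> A" using o unfolding in_closure_of by meson
      then obtain a where ya: "y = (a, 1)" "a \<in> S" by blast
      then have "a = m" using \<open>y \<in> E\<close> unfolding S_def by simp
      then have "x \<in> E" using ya \<open>y \<in> E\<close> xm by simp
      then show False using \<open>x \<in> F\<close> F(3) by blast
    qed
    then have "- S \<in> U" using Ucomp by blast
    moreover have "- S \<subseteq> {m. (m,1) \<in> E}" unfolding S_def by blast
    ultimately show ?thesis using Uup by blast
  qed
  have d0: "D 0 \<subseteq> A" "D 0 \<noteq> {}" "(subtopology (Xtop U 1) A) closure_of (D 0) = A" using D[rule_format, of 0] tA by simp_all
  have d1: "D 1 \<subseteq> A" "D 1 \<noteq> {}" "(subtopology (Xtop U 1) A) closure_of (D 1) = A" using D[rule_format, of 1] tA by simp_all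
  have d01: "D 0 \<inter> D 1 = {}" using dis[rule_format, of 0 1] by simp
  have "{m. (m,1) \<in> D 0} \<in> U" using key[OF d0(1,3) d1(1,2)] d01 by blast
  moreover have "{m. (m,1) \<in> D 1} \<in> U" using key[OF d1(1,3) d0(1,2)] d01 by blast
  ultimately have "{m. (m,1) \<in> D 0} \<inter> {m. (m,1) \<in> D 1} \<in> U" by (rule Uint)
  moreover have "{m. (m,1) \<in> D 0} \<inter> {m. (m,1) \<in> D 1} = {}" using d01 by blast
  ultimately show False using Ue by simp
qed

lemma Yset1:
  assumes U: "nonprincipal_ultrafilter U"
  shows "Yset U 1 = UNIV \<times> {1}"
proof -
  have "\<Union>{A. A \<subseteq> topspace (Xtop U 1) \<and> k_resolvable (subtopology (Xtop U 1) A) (1 + 1)} = {}"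
    using not2res[OF U] Xtop1_topspace[OF U] by (metis (no_types, lifting) Sup_bot_conv(1) mem_Collect_eq one_add_one)
  then show ?thesis unfolding Yset_def by (subst \<open>\<Union>_ = {}\<close>) (simp only: Diff_empty Xtop1_topspace[OF U])
qed

lemma Ytop1: 
  assumes U: "nonprincipal_ultrafilter U"
  shows "Ytop U 1 = Xtop U 1"
  unfolding Ytop_def Yset1[OF U] Xtop1_topspace[OF U, symmetric] by simp

lemma cluster_eq:
  assumes "trans R" "b \<in> cluster_of W R a"
  shows "cluster_of W R b = cluster_of W R a"
  using assms unfolding cluster_of_def trans_def by blast

lemma final_point:
  assumes "finite W" "R \<subseteq> W \<times> W" "trans R" "w \<in> W"
  shows "\<exists>v. (v = w \<or> (w, v) \<in> R) \<and> (\<forall>u. (v, u) \<in> R \<longrightarrow> (u, v) \<in> R)"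
  using assms(4)
proof (induction "card (insert w (R `` {w}))" arbitrary: w rule: less_induct)
  case less
  show ?case
  proof (cases "\<forall>u. (w, u) \<in> R \<longrightarrow> (u, w) \<in> R")
    case True then show ?thesis by blast
  next
    case False
    then obtain u where u: "(w,u) \<in> R" "(u,w) \<notin> R" by blast
    have uW: "u \<in> W" using u assms(2) by blast
    have sub: "insert u (R `` {u}) \<subseteq> insert w (R `` {w})" using u assms(3) unfolding trans_def by blast
    have "w \<notin> insert u (R `` {u})" using u by auto
    then have ps: "insert u (R `` {u}) \<subset> insert w (R `` {w})" using sub by blast
    have "R `` {w} \<subseteq> W" using assms(2) by blast
    then have "finite (insert w (R `` {w}))" using assms(1) finite_subset by blast
    then have "card (insert u (R `` {u})) < card (insert w (R `` {w}))" using ps psubset_card_mono by blast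
    then obtain v where v: "v = u \<or> (u, v) \<in> R" "\<forall>x. (v, x) \<in> R \<longrightarrow> (x, v) \<in> R"
      using less.hyps uW by blast
    then have "(w, v) \<in> R" using u assms(3) unfolding trans_def by blast
    then show ?thesis using v by blast
  qed
qed

lemma cell_sub: "cell U W R idx w \<subseteq> {w} \<times> UNIV"
  unfolding cell_def by auto

lemma XC_sub: "XC U W R idx C \<subseteq> C \<times> UNIV"
proof
  fix x assume "x \<in> XC U W R idx C"
  then obtain w where "w \<in> C" "x \<in> cell U W R idx w" unfolding XC_def by blast
  then show "x \<in> C \<times> UNIV" using cell_sub[of U W R idx w] by blast
qed

lemma XC_open_Int:
  assumes "nondegenerate R C \<longrightarrow> inj_on idx C"
    and "XC_open U W R idx C A" "XC_open U W R idx C B"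
  shows "XC_open U W R idx C (A \<inter> B)"
proof -
  have "A \<subseteq> XC U W R idx C" "B \<subseteq> XC U W R idx C" using assms unfolding XC_open_def by auto
  moreover have "nondegenerate R C \<longrightarrow> inj_on (\<lambda>(w, m). (m, idx w)) (XC U W R idx C)"
  proof
    assume "nondegenerate R C"
    then have "inj_on idx C" using assms by blast
    then show "inj_on (\<lambda>(w, m). (m, idx w)) (XC U W R idx C)"
      using XC_sub[of U W R idx C] unfolding inj_on_def by auto
  qed
  ultimately show ?thesis using assms(2,3) unfolding XC_open_def
    using inj_on_image_Int[of "\<lambda>(w, m). (m, idx w)" "XC U W R idx C" A B] openin_Int by fastforce
qed

lemma XC_open_Union:
  assumes "\<forall>k\<in>K. XC_open U W R idx C k"
  shows "XC_open U W R idx C (\<Union>K)"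
proof -
  have "(\<lambda>(w, m). (m, idx w)) ` \<Union>K = \<Union>((\<lambda>k. (\<lambda>(w, m). (m, idx w)) ` k) ` K)" by blast
  moreover have "nondegenerate R C \<longrightarrow> openin (Ytop U (card C)) (\<Union>((\<lambda>k. (\<lambda>(w, m). (m, idx w)) ` k) ` K))"
    using assms unfolding XC_open_def by (intro impI openin_Union) auto
  moreover have "\<Union>K \<subseteq> XC U W R idx C" using assms unfolding XC_open_def by blast
  ultimately show ?thesis unfolding XC_open_def by simp
qed

lemma XF_open:
  assumes "\<forall>C\<in>clusters W R. nondegenerate R C \<longrightarrow> bij_betw idx C {1..card C}"
  shows "openin (XF_top U W R idx) = (\<lambda>V. V \<subseteq> XF_set U W R idx \<and>
     (\<forall>C\<in>clusters W R.
        XC_open U W R idx C (V \<inter> XC U W R idx C) \<and>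
        (V \<inter> XC U W R idx C \<noteq> {} \<longrightarrow>
           (\<forall>C'\<in>clusters W R. cl_up R C C' \<longrightarrow> XC U W R idx C' \<subseteq> V))))"
    (is "_ = ?P")
proof -
  have inj: "nondegenerate R C \<longrightarrow> inj_on idx C" if "C \<in> clusters W R" for C
    using assms that bij_betw_imp_inj_on by blast
  have i1: "\<forall>S T. ?P S \<longrightarrow> ?P T \<longrightarrow> ?P (S \<inter> T)"
  proof (intro allI impI)
    fix S T assume S: "?P S" and T: "?P T"
    show "?P (S \<inter> T)"
    proof (intro conjI ballI impI)
      show "S \<inter> T \<subseteq> XF_set U W R idx" using S by blast
    next
      fix C assume C: "C \<in> clusters W R"
      have "S \<inter> T \<inter> XC U W R idx C = (S \<inter> XC U W R idx C) \<inter> (T \<inter> XC U W R idx C)" by blast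
      moreover have "XC_open U W R idx C (S \<inter> XC U W R idx C)" using S C by blast
      moreover have "XC_open U W R idx C (T \<inter> XC U W R idx C)" using T C by blast
      ultimately show "XC_open U W R idx C (S \<inter> T \<inter> XC U W R idx C)"
        using XC_open_Int[OF inj[OF C]] by simp
    next
      fix C C' assume "C \<in> clusters W R" "S \<inter> T \<inter> XC U W R idx C \<noteq> {}" "C' \<in> clusters W R" "cl_up R C C'"
      then have "S \<inter> XC U W R idx C \<noteq> {}" "T \<inter> XC U W R idx C \<noteq> {}" by auto
      then show "XC U W R idx C' \<subseteq> S \<inter> T" using S T \<open>C \<in> clusters W R\<close> \<open>C' \<in> clusters W R\<close> \<open>cl_up R C C'\<close> by auto
    qed
  qed
  have i2: "\<forall>K. (\<forall>k\<in>K. ?P k) \<longrightarrow> ?P (\<Union>K)"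
  proof (intro allI impI)
    fix K assume K: "\<forall>k\<in>K. ?P k"
    show "?P (\<Union>K)"
    proof (intro conjI ballI impI)
      show "\<Union>K \<subseteq> XF_set U W R idx" using K by blast
    next
      fix C assume C: "C \<in> clusters W R"
      have eq: "\<Union>K \<inter> XC U W R idx C = \<Union>((\<lambda>k. k \<inter> XC U W R idx C) ` K)" by blast
      have "\<forall>k\<in>(\<lambda>k. k \<inter> XC U W R idx C) ` K. XC_open U W R idx C k" using K C by blast
      then have "XC_open U W R idx C (\<Union>((\<lambda>k. k \<inter> XC U W R idx C) ` K))" by (rule XC_open_Union)
      then show "XC_open U W R idx C (\<Union>K \<inter> XC U W R idx C)" by (simp only: eq)
    next
      fix C C' assume "C \<in> clusters W R" "\<Union>K \<inter> XC U W R idx C \<noteq> {}" "C' \<in> clusters W R" "cl_up R C C'"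
      then obtain k where "k \<in> K" "k \<inter> XC U W R idx C \<noteq> {}" by blast
      then have "XC U W R idx C' \<subseteq> k" using K \<open>C \<in> clusters W R\<close> \<open>C' \<in> clusters W R\<close> \<open>cl_up R C C'\<close> by auto
      then show "XC U W R idx C' \<subseteq> \<Union>K" using \<open>k \<in> K\<close> by blast
    qed
  qed
  have "istopology ?P" unfolding istopology_def using i1 i2 by blast
  then show ?thesis unfolding XF_top_def by simp
qed

theorem lemma9:
  fixes U :: "nat set set" and W :: "'w set" and R :: "'w rel"
    and idx :: "'w \<Rightarrow> nat" and n :: nat
  assumes "nonprincipal_ultrafilter U"
    and "n \<ge> 1"
    and "finite W" and "R \<subseteq> W \<times> W" and "trans R"
    and "circumference W R \<le> n"
    and "\<forall>C. final_cluster W R C \<longrightarrow> simple_cluster R C"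
    and "\<forall>C\<in>clusters W R. nondegenerate R C \<longrightarrow> bij_betw idx C {1..card C}"
  shows "openly_irresolvable (XF_top U W R idx)"
proof -
  note Uf = assms(1)
  note Ue = Ufacts(1)[OF Uf] and Uup = Ufacts(2)[OF Uf] and Uint = Ufacts(3)[OF Uf]
    and Ucomp = Ufacts(4)[OF Uf] and Uuniv = Ufacts(5)[OF Uf]
  note opn = XF_open[OF assms(8), of U]
  let ?phi = "\<lambda>(w::'w, m::nat). (m, idx w)"
  show ?thesis unfolding openly_irresolvable_def
  proof (intro allI impI notI)
    fix V assume "openin (XF_top U W R idx) V \<and> V \<noteq> {}"
    then have Vo: "openin (XF_top U W R idx) V" and "V \<noteq> {}" by auto
    note PV = Vo[unfolded opn]
    assume res: "resolvable (subtopology (XF_top U W R idx) V)"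
    obtain p where pV: "p \<in> V" using \<open>V \<noteq> {}\<close> by blast
    then have "p \<in> XF_set U W R idx" using PV by blast
    then obtain C0 w0 where C0: "C0 \<in> clusters W R" and w0C0: "w0 \<in> C0" and pc: "p \<in> cell U W R idx w0"
      unfolding XF_set_def XC_def by blast
    obtain z where zW: "z \<in> W" and C0z: "C0 = cluster_of W R z" using C0 unfolding clusters_def by blast
    have w0W: "w0 \<in> W" using w0C0 C0z unfolding cluster_of_def by blast
    have C0eq: "C0 = cluster_of W R w0" using cluster_eq[OF assms(5)] w0C0 C0z by metis
    obtain v where v1: "v = w0 \<or> (w0, v) \<in> R" and v2: "\<forall>u. (v, u) \<in> R \<longrightarrow> (u, v) \<in> R"
      using final_point[OF assms(3,4,5) w0W] by blast
    have vW: "v \<in> W" using v1 w0W assms(4) by blast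
    define C' where "C' = cluster_of W R v"
    have vC': "v \<in> C'" unfolding C'_def cluster_of_def using vW by blast
    have C'cl: "C' \<in> clusters W R" unfolding C'_def clusters_def using vW by blast
    have clus_same: "C = C'" if Cc: "C \<in> clusters W R" and vC: "v \<in> C" for C
    proof -
      obtain z' where "C = cluster_of W R z'" using Cc unfolding clusters_def by blast
      then show ?thesis unfolding C'_def using cluster_eq[OF assms(5)] vC by metis
    qed
    have fin: "final_cluster W R C'"
      unfolding final_cluster_def
    proof (intro conjI C'cl notI)
      assume "\<exists>C''\<in>clusters W R. C'' \<noteq> C' \<and> cl_rel R C' C''"
      then obtain C'' x y where C'': "C'' \<in> clusters W R" "C'' \<noteq> C'" "x \<in> C'" "y \<in> C''" "(x, y) \<in> R"
        unfolding cl_rel_def by blast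
      have "v = x \<or> (v, x) \<in> R" using C''(3) unfolding C'_def cluster_of_def by blast
      then have vy: "(v, y) \<in> R" using C''(5) assms(5) unfolding trans_def by blast
      then have yv: "(y, v) \<in> R" using v2 by blast
      have "y \<in> C'" unfolding C'_def cluster_of_def using vy yv assms(4) by blast
      then have "cluster_of W R y = C'" unfolding C'_def using cluster_eq[OF assms(5)] by metis
      moreover obtain z' where "C'' = cluster_of W R z'" using C''(1) unfolding clusters_def by blast
      ultimately have "C'' = C'" using cluster_eq[OF assms(5)] C''(4) by metis
      then show False using C''(2) by blast
    qed
    then have simp: "simple_cluster R C'" using assms(7) by blast
    then have nd: "nondegenerate R C'" and c1: "card C' = 1" unfolding simple_cluster_def by auto
    have C'v: "C' = {v}" using c1 vC' by (metis card_1_singletonE singletonD)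
    have idxv: "idx v = 1" using assms(8) C'cl nd c1 C'v unfolding bij_betw_def by auto
    have Y1: "Yset U 1 = UNIV \<times> {1}" by (rule Yset1[OF Uf])
    have XCv: "XC U W R idx C' = {v} \<times> UNIV"
      using nd c1 idxv Y1 unfolding XC_def C'v cell_def by (auto simp: C'_def[symmetric] C'v)
    define Ov where "Ov = V \<inter> XC U W R idx C'"
    define M where "M = {m. (v, m) \<in> Ov}"
    have Osub: "Ov \<subseteq> {v} \<times> UNIV" unfolding Ov_def XCv by blast
    have OM: "Ov = {v} \<times> M" unfolding M_def using Osub by auto
    have phiM: "?phi ` ({v} \<times> M') = M' \<times> {1}" for M' using idxv by force
    have MU: "M \<in> U"
    proof (cases "C' = C0")
      case True
      have "p \<in> XC U W R idx C0" unfolding XC_def using w0C0 pc by blast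
      then have "p \<in> Ov" unfolding Ov_def True using pV by blast
      have "XC_open U W R idx C' Ov" unfolding Ov_def using PV C'cl by blast
      then have "openin (Ytop U 1) (M \<times> {1})" using nd c1 unfolding XC_open_def OM phiM by simp
      then have "M \<times> {1} = {} \<or> M \<in> U" unfolding Ytop1[OF Uf] Xtop1_open[OF Uf] by auto
      moreover have "M \<noteq> {}" using \<open>p \<in> Ov\<close> OM by blast
      ultimately show ?thesis by blast
    next
      case False
      have "cl_rel R C0 C'" unfolding cl_rel_def
        using w0C0 vC' v1 False C0eq C'_def by blast
      moreover have "\<not> cl_rel R C' C0"
      proof
        assume "cl_rel R C' C0"
        then obtain x y where xy: "x \<in> C'" "y \<in> C0" "(x, y) \<in> R" unfolding cl_rel_def by blast
        then have "x = v" using C'v by blast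
        have "y = w0 \<or> ((w0, y) \<in> R \<and> (y, w0) \<in> R)" using xy(2) C0eq unfolding cluster_of_def by blast
        then have "(v, w0) \<in> R" using xy(3) \<open>x = v\<close> assms(5) unfolding trans_def by blast
        then have "w0 \<in> C'" using v1 w0W unfolding C'_def cluster_of_def by blast
        then have "C0 = C'" using C'v C0eq v1 \<open>(v, w0) \<in> R\<close> by (metis C'_def cluster_eq[OF assms(5)])
        then show False using False by blast
      qed
      ultimately have "cl_up R C0 C'" unfolding cl_up_def by blast
      moreover have "p \<in> V \<inter> XC U W R idx C0" unfolding XC_def using w0C0 pc pV by blast
      ultimately have "XC U W R idx C' \<subseteq> V" using PV C0 C'cl by blast
      then have "M = UNIV" unfolding M_def Ov_def XCv by blast
      then show ?thesis using Uuniv by simp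
    qed
    have Oopen: "openin (XF_top U W R idx) ({v} \<times> M')" if "M' \<subseteq> M" "M' \<in> U" for M'
      unfolding opn
    proof (intro conjI ballI impI)
      show "{v} \<times> M' \<subseteq> XF_set U W R idx" unfolding XF_set_def using C'cl XCv by blast
    next
      fix C assume C: "C \<in> clusters W R"
      show "XC_open U W R idx C ({v} \<times> M' \<inter> XC U W R idx C)"
      proof (cases "C = C'")
        case True
        have "openin (Ytop U 1) (M' \<times> {1})" unfolding Ytop1[OF Uf] Xtop1_open[OF Uf] using that by auto
        have eqv: "{v} \<times> M' \<inter> XC U W R idx C' = {v} \<times> M'" unfolding XCv by blast
        show ?thesis unfolding True XC_open_def eqv c1 phiM[of M']
          using \<open>openin (Ytop U 1) (M' \<times> {1})\<close> eqv by blast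
      next
        case False
        have "v \<notin> C" using clus_same[OF C] False by blast
        then have "{v} \<times> M' \<inter> XC U W R idx C = {}" using XC_sub[of U W R idx C] by auto
        then show ?thesis unfolding XC_open_def by simp
      qed
    next
      fix C C'' assume C: "C \<in> clusters W R" and ne: "{v} \<times> M' \<inter> XC U W R idx C \<noteq> {}"
        and C'': "C'' \<in> clusters W R" "cl_up R C C''"
      obtain x where x: "x \<in> {v} \<times> M'" "x \<in> XC U W R idx C" using ne by blast
      have "fst x = v" using x(1) by auto
      moreover have "fst x \<in> C" using x(2) XC_sub[of U W R idx C] by auto
      ultimately have "v \<in> C" by simp
      then have "C = C'" using clus_same[OF C] by simp
      then have cr: "cl_rel R C' C''" "\<not> cl_rel R C'' C'" using C''(2) unfolding cl_up_def by auto
      then have "C'' \<noteq> C'" by auto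
      then have False using fin C''(1) cr(1) unfolding final_cluster_def by blast
      then show "XC U W R idx C'' \<subseteq> {v} \<times> M'" by blast
    qed
    have Vtop: "V \<subseteq> topspace (XF_top U W R idx)" using Vo by (rule openin_subset)
    have key: "{m \<in> M. (v, m) \<in> E} \<in> U"
      if E: "E \<subseteq> V" "(subtopology (XF_top U W R idx) V) closure_of E = V" for E
    proof (rule ccontr)
      assume "{m \<in> M. (v, m) \<in> E} \<notin> U"
      then have "- {m \<in> M. (v, m) \<in> E} \<in> U" using Ucomp by blast
      then have M'U: "M \<inter> - {m \<in> M. (v, m) \<in> E} \<in> U" using Uint MU by blast
      define M' where "M' = M \<inter> - {m \<in> M. (v, m) \<in> E}"
      have M'U': "M' \<in> U" using M'U M'_def by simp
      then obtain m where m: "m \<in> M'" using Ue by (metis ex_in_conv)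
      have o: "openin (XF_top U W R idx) ({v} \<times> M')" using Oopen[of M'] M'U' M'_def by blast
      have "{v} \<times> M' \<subseteq> V" using OM Ov_def M'_def by blast
      then have o2: "openin (subtopology (XF_top U W R idx) V) ({v} \<times> M')"
        using openin_subtopology_Int[OF o, of V] by (simp add: Int_absorb2)
      have vm: "(v, m) \<in> {v} \<times> M'" using m by simp
      then have "(v, m) \<in> V" using \<open>{v} \<times> M' \<subseteq> V\<close> by blast
      then have "(v, m) \<in> (subtopology (XF_top U W R idx) V) closure_of E"
        using E(2) by simp
      then obtain y where "y \<in> E" "y \<in> {v} \<times> M'" using o2 vm unfolding in_closure_of by meson
      then obtain m' where "m' \<in> M'" "(v, m') \<in> E" by blast
      then show False unfolding M'_def by simp
    qed
    obtain D where D: "\<forall>i<(2::nat). D i \<subseteq> topspace (subtopology (XF_top U W R idx) V) \<and> D i \<noteq> {} \<and>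
          (subtopology (XF_top U W R idx) V) closure_of (D i) = topspace (subtopology (XF_top U W R idx) V)"
      and dis: "\<forall>i<(2::nat). \<forall>j<(2::nat). i \<noteq> j \<longrightarrow> D i \<inter> D j = {}"
      using res unfolding resolvable_def k_resolvable_def by blast
    have tV: "topspace (subtopology (XF_top U W R idx) V) = V" using Vtop by (simp add: Int_absorb1)
    have D0: "D 0 \<subseteq> V" "(subtopology (XF_top U W R idx) V) closure_of (D 0) = V"
      using D[rule_format, of 0] tV by simp_all
    have D1: "D 1 \<subseteq> V" "(subtopology (XF_top U W R idx) V) closure_of (D 1) = V"
      using D[rule_format, of 1] tV by simp_all
    have d01: "D 0 \<inter> D 1 = {}" using dis[rule_format, of 0 1] by simp
    have "{m \<in> M. (v, m) \<in> D 0} \<in> U" by (rule key[OF D0])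
    moreover have "{m \<in> M. (v, m) \<in> D 1} \<in> U" by (rule key[OF D1])
    ultimately have "{m \<in> M. (v, m) \<in> D 0} \<inter> {m \<in> M. (v, m) \<in> D 1} \<in> U" by (rule Uint)
    moreover have "{m \<in> M. (v, m) \<in> D 0} \<inter> {m \<in> M. (v, m) \<in> D 1} = {}" using d01 by blast
    ultimately show False using Ue by simp
  qed
qed

end
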